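(* Let $n=2$, $O_1=\{p\in M: v_1(p)\ge v_2(p)\}$, $O_2=\{q\in M: v_1(q)<v_2(q)\}$, and assume that in $(O_1,O_2)$ agent 2 strongly envies agent 1. Consider the following procedure LocalSearch applied to an allocation $(A_1,A_2)$ in which agent 2 does not strongly envy agent 1: while agent 1 strongly envies agent 2, pick an arbitrary item $g\in A_2\setminus O_2$ and set $A_2\leftarrow A_2\setminus\{g\}$; then, if $v_2(A_2)<v_2(A_1)$ (agent 2 envies agent 1 in the partial allocation $(A_1,A_2)$), set $(A_1,A_2)\leftarrow(A_2\cup\{g\},A_1)$, and otherwise set $(A_1,A_2)\leftarrow(A_1\cup\{g\},A_2)$. Then whenever the loop condition holds an item $g\in A_2\setminus O_2$ exists, the loop terminates after at most $m$ iterations, and the output allocation is EF1 and has social welfare at least that of the input allocation.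
   Context: Two agents with additive valuations $v_1,v_2:2^M\to\mathbb{R}_{\ge0}$ over items $M=[m]$; an allocation $(A_1,A_2)$ is a partition of $M$; social welfare is $v_1(A_1)+v_2(A_2)$. Agent $i$ envies $j$ if $v_i(A_i)<v_i(A_j)$; agent $i$ strongly envies $j$ if $A_j\ne\emptyset$ and $v_i(A_i)<v_i(A_j\setminus\{g\})$ for all $g\in A_j$. An allocation is EF1 if no agent strongly envies the other. *)

theory Defs
  imports Complex_Main
begin

text \<open>Additive valuations are given by item values v :: 'a => real; the value of a
bundle S is sum v S. Allocations for two agents are pairs (A1, A2).\<close>

definition is_allocation :: "'a set \<Rightarrow> 'a set \<times> 'a set \<Rightarrow> bool" where
  "is_allocation M A \<longleftrightarrow> fst A \<union> snd A = M \<and> fst A \<inter> snd A = {}"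

definition strongly_envies :: "('a \<Rightarrow> real) \<Rightarrow> 'a set \<Rightarrow> 'a set \<Rightarrow> bool" where
  "strongly_envies v Ai Aj \<longleftrightarrow> Aj \<noteq> {} \<and> (\<forall>g\<in>Aj. sum v Ai < sum v (Aj - {g}))"

definition EF1 :: "('a \<Rightarrow> real) \<Rightarrow> ('a \<Rightarrow> real) \<Rightarrow> 'a set \<times> 'a set \<Rightarrow> bool" where
  "EF1 v1 v2 A \<longleftrightarrow> \<not> strongly_envies v1 (fst A) (snd A) \<and> \<not> strongly_envies v2 (snd A) (fst A)"

definition social_welfare :: "('a \<Rightarrow> real) \<Rightarrow> ('a \<Rightarrow> real) \<Rightarrow> 'a set \<times> 'a set \<Rightarrow> real" where
  "social_welfare v1 v2 A = sum v1 (fst A) + sum v2 (snd A)"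

text \<open>One iteration of the while loop of LocalSearch (nondeterministic choice of g
in A2 minus O2). The loop guard (agent 1 strongly envies agent 2) is part of the step.\<close>
definition ls_step :: "('a \<Rightarrow> real) \<Rightarrow> ('a \<Rightarrow> real) \<Rightarrow> 'a set \<Rightarrow>
    'a set \<times> 'a set \<Rightarrow> 'a set \<times> 'a set \<Rightarrow> bool" where
  "ls_step v1 v2 O2 A B \<longleftrightarrow>
     strongly_envies v1 (fst A) (snd A) \<and>
     (\<exists>g \<in> snd A - O2.
        (let A1 = fst A; A2' = snd A - {g} in
          if sum v2 A2' < sum v2 A1 then B = (A2' \<union> {g}, A1)
          else B = (A1 \<union> {g}, A2')))"

end

theory Submission
  imports Defs
begin

lemma step_cases:
  assumes "ls_step v1 v2 O2 A B"
  obtains g where "g \<in> snd A" "g \<notin> O2" "strongly_envies v1 (fst A) (snd A)"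
      "sum v2 (snd A - {g}) < sum v2 (fst A)" "B = (snd A, fst A)"
  | g where "g \<in> snd A" "g \<notin> O2" "strongly_envies v1 (fst A) (snd A)"
      "\<not> sum v2 (snd A - {g}) < sum v2 (fst A)" "B = (insert g (fst A), snd A - {g})"
  using assms unfolding ls_step_def Let_def
  by (auto simp: insert_absorb split: if_splits)

lemma sum_le_remove:
  assumes "finite S" "\<forall>x\<in>S. (v::'a\<Rightarrow>real) x \<ge> 0"
  shows "sum v (S - {h}) \<le> sum v S"
  using assms by (intro sum_mono2) auto

lemma sum_remove':
  assumes "finite S" "g \<in> S"
  shows "sum (v::'a\<Rightarrow>real) S = sum v (S - {g}) + v g"
  using assms by (simp add: sum.remove)

lemma swap_terminal:
  assumes finM: "finite M" and nonneg1: "\<forall>x\<in>M. v1 x \<ge> 0"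
    and alloc: "is_allocation M A"
    and g: "g \<in> snd A" and se: "strongly_envies v1 (fst A) (snd A)"
  shows "\<not> strongly_envies v1 (snd A) (fst A)"
proof
  assume se2: "strongly_envies v1 (snd A) (fst A)"
  obtain A1 A2 where A: "A = (A1, A2)" by (cases A)
  have sub: "A1 \<subseteq> M" "A2 \<subseteq> M" using alloc A by (auto simp: is_allocation_def)
  have fin: "finite A1" "finite A2" using sub finM finite_subset by auto
  from se2 A obtain h where h: "h \<in> A1" "sum v1 A2 < sum v1 (A1 - {h})"
    by (auto simp: strongly_envies_def)
  have "sum v1 (A1 - {h}) \<le> sum v1 A1" using fin sub nonneg1 by (intro sum_le_remove) auto
  moreover have "sum v1 A1 < sum v1 (A2 - {g})" using se g A by (auto simp: strongly_envies_def)
  moreover have "sum v1 (A2 - {g}) \<le> sum v1 A2" using fin sub nonneg1 by (intro sum_le_remove) auto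
  ultimately show False using h by linarith
qed

lemma step_inv:
  assumes finM: "finite M"
    and nonneg1: "\<forall>x\<in>M. v1 x \<ge> 0"
    and nonneg2: "\<forall>x\<in>M. v2 x \<ge> 0"
    and O2_def: "O2 = {q\<in>M. v1 q < v2 q}"
    and alloc: "is_allocation M A"
    and ne2: "\<not> strongly_envies v2 (snd A) (fst A)"
    and st: "ls_step v1 v2 O2 A B"
  shows "is_allocation M B \<and> \<not> strongly_envies v2 (snd B) (fst B)
         \<and> social_welfare v1 v2 B \<ge> social_welfare v1 v2 A"
proof -
  obtain A1 A2 where A: "A = (A1, A2)" by (cases A)
  have sub: "A1 \<subseteq> M" "A2 \<subseteq> M" and disj: "A1 \<inter> A2 = {}" and un: "A1 \<union> A2 = M"
    using alloc A by (auto simp: is_allocation_def)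
  have fin: "finite A1" "finite A2" using sub finM finite_subset by auto
  from st show ?thesis
  proof (cases rule: step_cases)
    case (1 g)
    have gA: "g \<in> A2" using 1 A by simp
    have gM: "g \<in> M" using gA sub by auto
    have vg: "v1 g \<ge> v2 g" using 1 gM O2_def by auto
    have e1: "sum v1 A1 < sum v1 (A2 - {g})" using 1 gA A by (auto simp: strongly_envies_def)
    have e2: "sum v2 (A2 - {g}) < sum v2 A1" using 1 A by simp
    have r1: "sum v1 A2 = sum v1 (A2 - {g}) + v1 g" using fin(2) gA by (rule sum_remove')
    have r2: "sum v2 A2 = sum v2 (A2 - {g}) + v2 g" using fin(2) gA by (rule sum_remove')
    have B: "B = (A2, A1)" using 1 A by simp
    have "\<not> strongly_envies v2 A1 A2"
      unfolding strongly_envies_def using gA e2 by force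
    moreover have "is_allocation M B" using B un disj by (auto simp: is_allocation_def)
    moreover have "social_welfare v1 v2 B \<ge> social_welfare v1 v2 A"
      using B A e1 e2 r1 r2 vg nonneg1 gM by (simp add: social_welfare_def)
    ultimately show ?thesis using B by simp
  next
    case (2 g)
    have gA: "g \<in> A2" using 2 A by simp
    have gM: "g \<in> M" using gA sub by auto
    have gn: "g \<notin> A1" using gA disj by auto
    have vg: "v1 g \<ge> v2 g" using 2 gM O2_def by auto
    have e2: "\<not> sum v2 (A2 - {g}) < sum v2 A1" using 2 A by simp
    have r2: "sum v2 A2 = sum v2 (A2 - {g}) + v2 g" using fin(2) gA by (rule sum_remove')
    have r1: "sum v1 (insert g A1) = v1 g + sum v1 A1" using fin gn by simp
    have B: "B = (insert g A1, A2 - {g})" using 2 A by simp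
    have "\<not> strongly_envies v2 (A2 - {g}) (insert g A1)"
      unfolding strongly_envies_def using e2 gn by auto
    moreover have "is_allocation M B" using B un disj gA by (auto simp: is_allocation_def)
    moreover have "social_welfare v1 v2 B \<ge> social_welfare v1 v2 A"
      using B A r1 r2 vg by (simp add: social_welfare_def)
    ultimately show ?thesis using B by simp
  qed
qed

lemma no_step_if_no_env:
  assumes "\<not> strongly_envies v1 (fst C) (snd C)" "(ls_step v1 v2 O2 ^^ k) C B"
  shows "k = 0"
proof (cases k)
  case (Suc j)
  then obtain y where "ls_step v1 v2 O2 C y" using assms(2)
    by (metis relpowp_Suc_D2)
  then show ?thesis using assms(1) by (simp add: ls_step_def)
qed simp

lemma steps_bound:
  assumes finM: "finite M"
    and nonneg1: "\<forall>x\<in>M. v1 x \<ge> 0"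
  shows "is_allocation M A \<Longrightarrow> (ls_step v1 v2 O2 ^^ k) A B \<Longrightarrow> k \<le> card (snd A)"
proof (induction k arbitrary: A)
  case 0
  then show ?case by simp
next
  case (Suc k)
  obtain C where st: "ls_step v1 v2 O2 A C" and rest: "(ls_step v1 v2 O2 ^^ k) C B"
    using Suc.prems(2) by (metis relpowp_Suc_D2)
  obtain A1 A2 where A: "A = (A1, A2)" by (cases A)
  have sub: "A1 \<subseteq> M" "A2 \<subseteq> M" and disj: "A1 \<inter> A2 = {}" and un: "A1 \<union> A2 = M"
    using Suc.prems(1) A by (auto simp: is_allocation_def)
  have fin: "finite A1" "finite A2" using sub finM finite_subset by auto
  from st show ?case
  proof (cases rule: step_cases)
    case (1 g)
    have "\<not> strongly_envies v1 (fst C) (snd C)"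
      using swap_terminal[OF finM nonneg1 Suc.prems(1) 1(1) 1(3)] 1(5) by simp
    then have "k = 0" using rest by (rule no_step_if_no_env)
    moreover have "card (snd A) > 0" using 1(1) fin A card_gt_0_iff by auto
    ultimately show ?thesis by simp
  next
    case (2 g)
    have gA: "g \<in> A2" using 2 A by simp
    have "is_allocation M C" using 2(5) A un disj gA by (auto simp: is_allocation_def)
    then have "k \<le> card (snd C)" using Suc.IH rest by blast
    moreover have "card (snd C) = card A2 - 1" using 2(5) A fin gA by simp
    moreover have "card A2 > 0" using gA fin card_gt_0_iff by auto
    ultimately show ?thesis using A by simp
  qed
qed

lemma envy_needs_item:
  assumes finM: "finite M"
    and nonneg1: "\<forall>x\<in>M. v1 x \<ge> 0"
    and nonneg2: "\<forall>x\<in>M. v2 x \<ge> 0"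
    and O1_def: "O1 = {p\<in>M. v1 p \<ge> v2 p}"
    and O2_def: "O2 = {q\<in>M. v1 q < v2 q}"
    and O_env: "strongly_envies v2 O2 O1"
    and alloc: "is_allocation M B"
    and se: "strongly_envies v1 (fst B) (snd B)"
  shows "snd B - O2 \<noteq> {}"
proof
  assume emp: "snd B - O2 = {}"
  obtain B1 B2 where Bd: "B = (B1, B2)" by (cases B)
  have sub: "B1 \<subseteq> M" "B2 \<subseteq> M" and disj: "B1 \<inter> B2 = {}" and un: "B1 \<union> B2 = M"
    using alloc Bd by (auto simp: is_allocation_def)
  have fin: "finite B1" "finite B2" using sub finM finite_subset by auto
  have B2O: "B2 \<subseteq> O2" using emp Bd by auto
  have O1B: "O1 \<subseteq> B1" using B2O un O1_def O2_def by auto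
  have finO: "finite O1" "finite O2" using finM O1_def O2_def by auto
  obtain g where gB: "g \<in> B2" and e1: "sum v1 B1 < sum v1 (B2 - {g})"
    using se Bd by (auto simp: strongly_envies_def)
  obtain h where h: "h \<in> O1" and e2: "sum v2 O2 < sum v2 (O1 - {h})"
    using O_env by (auto simp: strongly_envies_def)
  have a1: "sum v1 O1 \<le> sum v1 B1" using fin O1B sub nonneg1 by (intro sum_mono2) auto
  have a2: "sum v1 (B2 - {g}) \<le> sum v1 B2" using fin sub nonneg1 by (intro sum_le_remove) auto
  have a3: "sum v1 B2 \<le> sum v1 O2" using finO B2O O2_def nonneg1 by (intro sum_mono2) auto
  have a4: "sum v1 O2 < sum v2 O2"
    using finO gB B2O O2_def by (intro sum_strict_mono) auto
  have a5: "sum v2 (O1 - {h}) \<le> sum v2 O1" using finO O1_def nonneg2 by (intro sum_le_remove) auto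
  have a6: "sum v2 O1 \<le> sum v1 O1" using O1_def by (intro sum_mono) auto
  show False using a1 a2 a3 a4 a5 a6 e1 e2 by linarith
qed

theorem lemma2:
  fixes M :: "'a set" and v1 v2 :: "'a \<Rightarrow> real" and A :: "'a set \<times> 'a set"
    and O1 O2 :: "'a set"
  assumes finM: "finite M"
    and nonneg1: "\<forall>x\<in>M. v1 x \<ge> 0"
    and nonneg2: "\<forall>x\<in>M. v2 x \<ge> 0"
    and O1_def: "O1 = {p\<in>M. v1 p \<ge> v2 p}"
    and O2_def: "O2 = {q\<in>M. v1 q < v2 q}"
    and O_env: "strongly_envies v2 O2 O1"
    and alloc: "is_allocation M A"
    and no_env2: "\<not> strongly_envies v2 (snd A) (fst A)"
  shows "(\<forall>B. (ls_step v1 v2 O2)\<^sup>*\<^sup>* A B \<longrightarrow> strongly_envies v1 (fst B) (snd B)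
              \<longrightarrow> snd B - O2 \<noteq> {})
       \<and> (\<forall>k B. (ls_step v1 v2 O2 ^^ k) A B \<longrightarrow> k \<le> card M)
       \<and> (\<forall>B. (ls_step v1 v2 O2)\<^sup>*\<^sup>* A B \<longrightarrow> \<not> strongly_envies v1 (fst B) (snd B)
              \<longrightarrow> is_allocation M B \<and> EF1 v1 v2 B
                  \<and> social_welfare v1 v2 B \<ge> social_welfare v1 v2 A)"
proof -
  have inv: "is_allocation M B \<and> \<not> strongly_envies v2 (snd B) (fst B)
         \<and> social_welfare v1 v2 B \<ge> social_welfare v1 v2 A"
    if "(ls_step v1 v2 O2)\<^sup>*\<^sup>* A B" for B
    using that
  proof (induction rule: rtranclp_induct)
    case base
    then show ?case using alloc no_env2 by simp
  next
    case (step y z)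
    then show ?case
      using step_inv[OF finM nonneg1 nonneg2 O2_def, of y z] by fastforce
  qed
  have cardA: "card (snd A) \<le> card M"
    using alloc finM by (intro card_mono) (auto simp: is_allocation_def)
  have c1: "\<forall>B. (ls_step v1 v2 O2)\<^sup>*\<^sup>* A B \<longrightarrow> strongly_envies v1 (fst B) (snd B)
              \<longrightarrow> snd B - O2 \<noteq> {}"
    using envy_needs_item[OF finM nonneg1 nonneg2 O1_def O2_def O_env] inv by blast
  have c2: "\<forall>k B. (ls_step v1 v2 O2 ^^ k) A B \<longrightarrow> k \<le> card M"
    using steps_bound[OF finM nonneg1 alloc] cardA by fastforce
  have c3: "\<forall>B. (ls_step v1 v2 O2)\<^sup>*\<^sup>* A B \<longrightarrow> \<not> strongly_envies v1 (fst B) (snd B)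
              \<longrightarrow> is_allocation M B \<and> EF1 v1 v2 B
                  \<and> social_welfare v1 v2 B \<ge> social_welfare v1 v2 A"
    using inv by (auto simp: EF1_def)
  show ?thesis using c1 c2 c3 by blast
qed

end
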